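(* Let $K$ be a field, $n\ge 2$, $R=K[x_1,\dots,x_n]$, and let $\boldsymbol{\lambda}=(\lambda_1,\dots,\lambda_n)$ be a vector of positive integers. Put $\ell=\mathrm{lcm}(\lambda_1,\dots,\lambda_{n-1})$ and $\boldsymbol{\lambda}'=(\lambda_1,\dots,\lambda_{n-1},\lambda_n+\ell)$. If $I(\boldsymbol{\lambda}')$ is normal then $I(\boldsymbol{\lambda})$ is normal. If moreover $\lambda_n\ge \ell$ and $I(\boldsymbol{\lambda})$ is normal, then $I(\boldsymbol{\lambda}')$ is normal.
   Context: For a vector $\boldsymbol{\mu}=(\mu_1,\dots,\mu_n)$ of positive integers, $J(\boldsymbol{\mu})=(x_1^{\mu_1},\dots,x_n^{\mu_n})\subseteq R$ and $I(\boldsymbol{\mu})=\overline{J(\boldsymbol{\mu})}$ is its integral closure in $R$. An ideal $I$ of an integral domain is normal if $I^m$ is integrally closed for every positive integer $m$. *)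

theory Defs
  imports "HOL-Library.Poly_Mapping"
begin

(* The polynomial ring R = K[x_1,...,x_n] is realised as the subring polyR n of
polynomials only involving the variables x_0, ..., x_(n-1). *)

type_synonym 'a mpoly = "(nat \<Rightarrow>\<^sub>0 nat) \<Rightarrow>\<^sub>0 'a"

definition polyR :: "nat \<Rightarrow> 'a::comm_ring_1 mpoly set" where
  "polyR n = {p :: 'a mpoly. \<forall>m \<in> Poly_Mapping.keys p. Poly_Mapping.keys m \<subseteq> {..<n}}"

definition mvar :: "nat \<Rightarrow> 'a::comm_ring_1 mpoly" where
  "mvar i = Poly_Mapping.single (Poly_Mapping.single i 1) 1"

definition is_ideal :: "nat \<Rightarrow> 'a::comm_ring_1 mpoly set \<Rightarrow> bool" where
  "is_ideal n I \<longleftrightarrow> I \<subseteq> polyR n \<and> 0 \<in> I \<and> (\<forall>a\<in>I. \<forall>b\<in>I. a + b \<in> I)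
     \<and> (\<forall>r\<in>polyR n. \<forall>a\<in>I. r * a \<in> I)"

definition ideal_gen :: "nat \<Rightarrow> 'a::comm_ring_1 mpoly set \<Rightarrow> 'a mpoly set" where
  "ideal_gen n S = \<Inter>{I. is_ideal n I \<and> S \<subseteq> I}"

definition ideal_mult :: "nat \<Rightarrow> 'a::comm_ring_1 mpoly set \<Rightarrow> 'a mpoly set \<Rightarrow> 'a mpoly set" where
  "ideal_mult n I J = ideal_gen n {a * b | a b. a \<in> I \<and> b \<in> J}"

fun ideal_pow :: "nat \<Rightarrow> 'a::comm_ring_1 mpoly set \<Rightarrow> nat \<Rightarrow> 'a mpoly set" where
  "ideal_pow n I 0 = polyR n"
| "ideal_pow n I (Suc m) = ideal_mult n (ideal_pow n I m) I"

definition int_closure :: "nat \<Rightarrow> 'a::comm_ring_1 mpoly set \<Rightarrow> 'a mpoly set" where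
  "int_closure n I = {x \<in> polyR n. \<exists>k\<ge>1. \<exists>a::nat \<Rightarrow> 'a mpoly.
      (\<forall>i\<in>{1..k}. a i \<in> ideal_pow n I i) \<and> x ^ k + (\<Sum>i=1..k. a i * x ^ (k - i)) = 0}"

definition integrally_closed :: "nat \<Rightarrow> 'a::comm_ring_1 mpoly set \<Rightarrow> bool" where
  "integrally_closed n I \<longleftrightarrow> int_closure n I = I"

definition normal_ideal :: "nat \<Rightarrow> 'a::comm_ring_1 mpoly set \<Rightarrow> bool" where
  "normal_ideal n I \<longleftrightarrow> (\<forall>m\<ge>1. integrally_closed n (ideal_pow n I m))"

(* J(mu) = (x_1^mu_1, ..., x_n^mu_n) and I(mu) its integral closure
(variables indexed 0..n-1 here). *)
definition J_ideal :: "nat \<Rightarrow> (nat \<Rightarrow> nat) \<Rightarrow> 'a::comm_ring_1 mpoly set" where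
  "J_ideal n \<mu> = ideal_gen n {mvar i ^ \<mu> i | i. i < n}"

definition I_ideal :: "nat \<Rightarrow> (nat \<Rightarrow> nat) \<Rightarrow> 'a::comm_ring_1 mpoly set" where
  "I_ideal n \<mu> = int_closure n (J_ideal n \<mu>)"

end

theory Submission
  imports Defs Complex_Main
begin


lemma frac_iff: "(l::real) > 0 \<Longrightarrow> D > 0 \<Longrightarrow> (m \<le> N / l + t / D) \<longleftrightarrow> (m * l * D \<le> N * D + t * l)"
proof -
  assume l: "l > 0" and D: "D > 0"
  have "N / l + t / D = (N * D + t * l) / (l * D)" using l D by (simp add: field_simps)
  then show ?thesis using l D by (simp add: le_divide_eq mult.assoc)
qed

definition Fw :: "(nat \<Rightarrow> nat) \<Rightarrow> nat \<Rightarrow> (nat \<Rightarrow>\<^sub>0 nat) \<Rightarrow> real" where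
  "Fw lam n a = (\<Sum>i<n. real (Poly_Mapping.lookup a i) / real (lam i))"

definition Nw :: "nat \<Rightarrow> (nat \<Rightarrow> nat) \<Rightarrow> nat \<Rightarrow> (nat \<Rightarrow>\<^sub>0 nat) \<Rightarrow> nat" where
  "Nw l lam k a = (\<Sum>i<k. Poly_Mapping.lookup a i * (l div lam i))"

lemma Fw_split:
  assumes "n = Suc k" "\<forall>i<n. lam i > 0" "\<forall>i<k. lam i dvd l" "l > 0"
  shows "Fw lam n a = real (Nw l lam k a) / real l + real (Poly_Mapping.lookup a k) / real (lam k)"
proof -
  have "real (Nw l lam k a) / real l = (\<Sum>i<k. real (Poly_Mapping.lookup a i) / real (lam i))"
    unfolding Nw_def of_nat_sum sum_divide_distrib
  proof (rule sum.cong[OF refl])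
    fix i assume "i \<in> {..<k}"
    then have d: "lam i dvd l" "lam i > 0" using assms by auto
    then show "real (Poly_Mapping.lookup a i * (l div lam i)) / real l = real (Poly_Mapping.lookup a i) / real (lam i)"
      using assms(4) by (simp add: real_of_nat_div field_simps)
  qed
  then show ?thesis unfolding Fw_def assms(1) by simp
qed




abbreviation lk where "lk \<equiv> Poly_Mapping.lookup"
abbreviation sg where "sg \<equiv> Poly_Mapping.single"

definition Comb :: "nat \<Rightarrow> (nat \<Rightarrow> nat) \<Rightarrow> bool" where
  "Comb n lam \<longleftrightarrow> (\<forall>m\<ge>1. \<forall>a. Poly_Mapping.keys a \<subseteq> {..<n} \<longrightarrow> real m \<le> Fw lam n a \<longrightarrow>
     (\<exists>bs. (\<forall>j<m. 1 \<le> Fw lam n (bs j)) \<and> (\<forall>i. (\<Sum>j<m. lk (bs j) i) \<le> lk a i)))"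

lemma Nw_cong: "(\<forall>i<k. lk a i = lk b i) \<Longrightarrow> Nw l lam k a = Nw l lam k b"
  unfolding Nw_def by simp

lemma Nw_sum_le:
  assumes "\<forall>i. (\<Sum>j<m. lk (bs j) i) \<le> lk a i"
  shows "(\<Sum>j<m. Nw l lam k (bs j)) \<le> Nw l lam k a"
proof -
  have "(\<Sum>j<m. Nw l lam k (bs j)) = (\<Sum>i<k. (\<Sum>j<m. lk (bs j) i) * (l div lam i))"
    unfolding Nw_def by (simp add: sum.swap[of _ "{..<m}"] sum_distrib_right)
  also have "\<dots> \<le> Nw l lam k a" unfolding Nw_def
    by (rule sum_mono) (use assms in simp)
  finally show ?thesis .
qed

lemma lk_upd_k:
  "lk (a + sg k d) i = (if i = k then lk a k + d else lk a i)"
  by (simp add: lookup_add lookup_single)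

lemma lk_minus_k:
  "lk (a - sg k d) i = (if i = k then lk a k - d else lk a i)"
  by (simp add: lookup_minus lookup_single)

lemma keys_upd_k:
  assumes "Poly_Mapping.keys a \<subseteq> {..<n}" "k < n"
  shows "Poly_Mapping.keys (a + sg k d) \<subseteq> {..<n}" "Poly_Mapping.keys (a - sg k d) \<subseteq> {..<n}"
  using assms by (auto simp: in_keys_iff lookup_add lookup_minus lookup_single when_def split: if_splits)

lemma comb_setup:
  assumes n: "n = Suc k" and pos: "\<forall>i<n. lam i > 0" and dv: "\<forall>i<k. lam i dvd l" and l0: "l > 0"
    and lam': "lam' = lam(k := lam k + l)"
  shows "Fw lam n a = real (Nw l lam k a) / real l + real (lk a k) / real (lam k)"
    "Fw lam' n a = real (Nw l lam k a) / real l + real (lk a k) / (real (lam k) + real l)"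
proof -
  show "Fw lam n a = real (Nw l lam k a) / real l + real (lk a k) / real (lam k)"
    by (rule Fw_split[OF n pos dv l0])
  have pos': "\<forall>i<n. lam' i > 0" "\<forall>i<k. lam' i dvd l" using pos dv lam' n by auto
  have "Nw l lam' k a = Nw l lam k a" unfolding Nw_def lam' by simp
  moreover have "Fw lam' n a = real (Nw l lam' k a) / real l + real (lk a k) / real (lam' k)"
    by (rule Fw_split[OF n pos'(1) pos'(2) l0])
  ultimately show "Fw lam' n a = real (Nw l lam k a) / real l + real (lk a k) / (real (lam k) + real l)"
    using lam' by simp
qed




lemma comb1:
  assumes n: "n = Suc k" and pos: "\<forall>i<n. lam i > 0" and dv: "\<forall>i<k. lam i dvd l" and l0: "l > 0"
    and lam': "lam' = lam(k := lam k + l)"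
    and C': "Comb n lam'"
  shows "Comb n lam"
  unfolding Comb_def
proof (intro allI impI)
  fix m a assume m1: "1 \<le> m" and ka: "Poly_Mapping.keys a \<subseteq> {..<n}" and Fa: "real m \<le> Fw lam n a"
  note F = comb_setup[OF n pos dv l0 lam']
  define N where "N = Nw l lam k a"
  define t where "t = lk a k"
  define \<mu> where "\<mu> = lam k"
  have \<mu>0: "\<mu> > 0" using pos n unfolding \<mu>_def by auto
  define \<delta> where "\<delta> = m * l - N"
  define a' where "a' = a + sg k \<delta>"
  have kn: "k < n" using n by simp
  have ka': "Poly_Mapping.keys a' \<subseteq> {..<n}" unfolding a'_def by (rule keys_upd_k[OF ka kn])
  have N': "Nw l lam k a' = N" unfolding N_def a'_def by (rule Nw_cong) (simp add: lk_upd_k)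
  have t': "lk a' k = t + \<delta>" unfolding a'_def t_def by (simp add: lk_upd_k)
  have Fa2: "real m \<le> real N / real l + real t / real \<mu>" using Fa F(1)[of a] unfolding N_def t_def \<mu>_def by simp
  have Fa3: "real m * real l * real \<mu> \<le> real N * real \<mu> + real t * real l"
    using Fa2 \<mu>0 l0 frac_iff[of "real l" "real \<mu>"] by simp
  have "real m \<le> Fw lam' n a'"
  proof (cases "m * l \<le> N")
    case True
    then have "real m \<le> real N / real l" using l0 by (simp add: field_simps flip: of_nat_mult)
    moreover have "0 \<le> real (lk a' k) / (real (lam k) + real l)" by simp
    ultimately show ?thesis unfolding F(2)[of a'] N' by linarith
  next
    case False
    then have d: "real \<delta> = real m * real l - real N" unfolding \<delta>_def by (simp add: of_nat_diff)
    have "real m * real l * (real \<mu> + real l) \<le> real N * (real \<mu> + real l) + (real t + real \<delta>) * real l"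
    proof -
      have e0: "real l * (real l * real m) = (real m * real l) * real l" by simp
      have e: "real l * (real l * real m) = real N * real l + real \<delta> * real l"
        unfolding e0 d by (simp add: algebra_simps)
      show ?thesis using Fa3 by (simp add: algebra_simps e)
    qed
    then have "real m \<le> real N / real l + (real t + real \<delta>) / (real \<mu> + real l)"
      using \<mu>0 l0 frac_iff[of "real l" "real \<mu> + real l"] by simp
    then show ?thesis using F(2)[of a'] N' t' unfolding \<mu>_def by simp
  qed
  then obtain bs' where B1: "\<forall>j<m. 1 \<le> Fw lam' n (bs' j)" and B2: "\<forall>i. (\<Sum>j<m. lk (bs' j) i) \<le> lk a' i"
    using C' m1 ka' unfolding Comb_def by blast
  define dj where "dj j = l - Nw l lam k (bs' j)" for j
  define bs where "bs j = bs' j - sg k (dj j)" for j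
  have key: "dj j \<le> lk (bs' j) k \<and> 1 \<le> Fw lam n (bs j)" if j: "j < m" for j
  proof -
    define Nj where "Nj = Nw l lam k (bs' j)"
    define sj where "sj = lk (bs' j) k"
    have NB: "Nw l lam k (bs j) = Nj" unfolding Nj_def bs_def by (rule Nw_cong) (simp add: lk_minus_k)
    have sB: "lk (bs j) k = sj - dj j" unfolding sj_def bs_def by (simp add: lk_minus_k)
    have h1: "1 \<le> real Nj / real l + real sj / (real \<mu> + real l)"
      using B1 j unfolding F(2) Nj_def sj_def \<mu>_def by blast
    show ?thesis
    proof (cases "l \<le> Nj")
      case True
      then have "dj j = 0" unfolding dj_def Nj_def by simp
      moreover have "1 \<le> real Nj / real l" using True l0 by simp
      moreover have "0 \<le> real (lk (bs j) k) / real (lam k)" by simp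
      ultimately show ?thesis unfolding F(1)[of "bs j"] NB by (intro conjI) linarith+
    next
      case False
      then have d: "real (dj j) = real l - real Nj" unfolding dj_def Nj_def by (simp add: of_nat_diff)
      have h0: "1 * real l * (real \<mu> + real l) \<le> real Nj * (real \<mu> + real l) + real sj * real l"
        using h1 \<mu>0 l0 frac_iff[of "real l" "real \<mu> + real l"] by simp
      have e: "(real \<mu> + real l) * real (dj j) = 1 * real l * (real \<mu> + real l) - real Nj * (real \<mu> + real l)"
        unfolding d by (simp add: algebra_simps)
      have h2: "(real \<mu> + real l) * real (dj j) \<le> real sj * real l"
        using h0 e by linarith
      have "real l * real (dj j) \<le> (real \<mu> + real l) * real (dj j)" using \<mu>0 by (simp add: mult_right_mono)
      then have "real l * real (dj j) \<le> real l * real sj" using h2 by (simp add: mult.commute)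
      then have le: "dj j \<le> sj" using l0 by simp
      then have e1: "real (sj - dj j) * real l = real sj * real l - real (dj j) * real l" by (simp add: of_nat_diff algebra_simps)
      have e2: "(real \<mu> + real l) * real (dj j) = real \<mu> * real l - real Nj * real \<mu> + real (dj j) * real l"
        unfolding d by (simp add: algebra_simps)
      have "1 * real l * real \<mu> \<le> real Nj * real \<mu> + real (sj - dj j) * real l"
        using h2 e1 e2 by (simp add: algebra_simps)
      then have "1 \<le> real Nj / real l + real (sj - dj j) / real \<mu>"
        using \<mu>0 l0 frac_iff[of "real l" "real \<mu>" 1 "real Nj" "real (sj - dj j)"] by simp
      then show ?thesis using F(1)[of "bs j"] NB sB le unfolding sj_def \<mu>_def by simp
    qed
  qed
  show "\<exists>bs. (\<forall>j<m. 1 \<le> Fw lam n (bs j)) \<and> (\<forall>i. (\<Sum>j<m. lk (bs j) i) \<le> lk a i)"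
  proof (intro exI conjI allI impI)
    show "1 \<le> Fw lam n (bs j)" if "j < m" for j using key that by blast
    fix i
    show "(\<Sum>j<m. lk (bs j) i) \<le> lk a i"
    proof (cases "i = k")
      case False
      then have "(\<Sum>j<m. lk (bs j) i) = (\<Sum>j<m. lk (bs' j) i)" unfolding bs_def by (simp add: lk_minus_k)
      also have "\<dots> \<le> lk a' i" using B2 by blast
      also have "\<dots> = lk a i" using False unfolding a'_def by (simp add: lk_upd_k)
      finally show ?thesis .
    next
      case True
      have sumN: "(\<Sum>j<m. Nw l lam k (bs' j)) \<le> N" using Nw_sum_le[OF B2, of l lam k] N' by simp
      have "m * l \<le> (\<Sum>j<m. dj j + Nw l lam k (bs' j))"
      proof -
        have "(\<Sum>j<m. l) \<le> (\<Sum>j<m. dj j + Nw l lam k (bs' j))"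
          by (rule sum_mono) (simp add: dj_def)
        then show ?thesis by simp
      qed
      then have sd: "\<delta> \<le> (\<Sum>j<m. dj j)" using sumN unfolding \<delta>_def sum.distrib by linarith
      have "(\<Sum>j<m. lk (bs j) k) = (\<Sum>j<m. lk (bs' j) k - dj j)" unfolding bs_def by (simp add: lk_minus_k)
      also have "\<dots> = (\<Sum>j<m. lk (bs' j) k) - (\<Sum>j<m. dj j)"
        by (rule sum_subtractf_nat) (use key in auto)
      also have "\<dots> \<le> t" using B2[rule_format, of k] t' sd by linarith
      finally show ?thesis using True t_def by simp
    qed
  qed
qed




lemma comb2:
  assumes n: "n = Suc k" and pos: "\<forall>i<n. lam i > 0" and dv: "\<forall>i<k. lam i dvd l" and l0: "l > 0"
    and lam': "lam' = lam(k := lam k + l)"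
    and C: "Comb n lam" and big: "l \<le> lam k"
  shows "Comb n lam'"
  unfolding Comb_def
proof (intro allI impI)
  fix m a assume m1: "1 \<le> m" and ka: "Poly_Mapping.keys a \<subseteq> {..<n}" and Fa: "real m \<le> Fw lam' n a"
  note F = comb_setup[OF n pos dv l0 lam']
  define N where "N = Nw l lam k a"
  define t where "t = lk a k"
  define \<mu> where "\<mu> = lam k"
  have \<mu>0: "\<mu> > 0" using pos n unfolding \<mu>_def by auto
  have lmu: "real l \<le> real \<mu>" using big unfolding \<mu>_def by simp
  define \<delta> where "\<delta> = m * l - N"
  define t0 where "t0 = nat \<lceil>real \<mu> * real \<delta> / real l\<rceil>"
  define a0 where "a0 = (a - sg k t) + sg k t0"
  have kn: "k < n" using n by simp
  have ka0: "Poly_Mapping.keys a0 \<subseteq> {..<n}" unfolding a0_def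
    by (rule keys_upd_k(1)[OF keys_upd_k(2)[OF ka kn] kn])
  have lka0: "lk a0 i = (if i = k then t0 else lk a i)" for i
    unfolding a0_def t_def by (simp add: lk_upd_k lk_minus_k)
  have N0: "Nw l lam k a0 = N" unfolding N_def by (rule Nw_cong) (simp add: lka0)
  have Fa2: "real m \<le> real N / real l + real t / (real \<mu> + real l)"
    using Fa unfolding F(2) N_def t_def \<mu>_def .
  have Fa3: "real m * real l * (real \<mu> + real l) \<le> real N * (real \<mu> + real l) + real t * real l"
    using Fa2 \<mu>0 l0 frac_iff[of "real l" "real \<mu> + real l"] by simp
  have t0ge: "real \<mu> * real \<delta> / real l \<le> real t0" unfolding t0_def by linarith
  have t0lt: "real t0 < real \<mu> * real \<delta> / real l + 1"
    unfolding t0_def using l0 by (simp add: of_nat_nat ceiling_less_iff) linarith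
  have dl0: "m * l \<le> N + \<delta>" unfolding \<delta>_def by simp
  then have dl: "real m * real l \<le> real N + real \<delta>" by (metis of_nat_add of_nat_le_iff of_nat_mult)
  have t0t: "t0 + \<delta> \<le> t"
  proof (cases "m * l \<le> N")
    case True
    then have "\<delta> = 0" unfolding \<delta>_def by simp
    then show ?thesis unfolding t0_def by simp
  next
    case False
    then have d: "real \<delta> = real m * real l - real N" unfolding \<delta>_def by (simp add: of_nat_diff)
    have e: "real m * real l * (real \<mu> + real l) = (real N + real \<delta>) * (real \<mu> + real l)" unfolding d by simp
    have "(real N + real \<delta>) * (real \<mu> + real l) \<le> real N * (real \<mu> + real l) + real t * real l"
      using Fa3 unfolding e .
    then have "real \<mu> * real \<delta> + real \<delta> * real l \<le> real t * real l" by (simp add: algebra_simps)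
    then have "real \<mu> * real \<delta> / real l \<le> real t - real \<delta>" using l0 by (simp add: field_simps)
    then have "\<lceil>real \<mu> * real \<delta> / real l\<rceil> \<le> int t - int \<delta>" by (simp add: ceiling_le_iff)
    moreover have c0: "0 \<le> \<lceil>real \<mu> * real \<delta> / real l\<rceil>"
    proof -
      have "0 \<le> real \<mu> * real \<delta> / real l" by simp
      then show ?thesis by linarith
    qed
    ultimately have "int (t0 + \<delta>) \<le> int t" unfolding t0_def by simp
    then show ?thesis by simp
  qed
  have "real m \<le> Fw lam n a0"
  proof -
    have "real m \<le> real N / real l + real \<delta> / real l" using dl l0 by (simp add: field_simps)
    also have "real \<delta> / real l \<le> real t0 / real \<mu>" using t0ge \<mu>0 l0 by (simp add: field_simps)
    finally show ?thesis unfolding F(1) N0 lka0 \<mu>_def by simp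
  qed
  then obtain bs where B1: "\<forall>j<m. 1 \<le> Fw lam n (bs j)" and B2: "\<forall>i. (\<Sum>j<m. lk (bs j) i) \<le> lk a0 i"
    using C m1 ka0 unfolding Comb_def by blast
  define dj where "dj j = l - Nw l lam k (bs j)" for j
  define bs' where "bs' j = bs j + sg k (dj j)" for j
  have key: "real \<mu> * real (dj j) \<le> real l * real (lk (bs j) k) \<and> 1 \<le> Fw lam' n (bs' j)" if j: "j < m" for j
  proof -
    define Nj where "Nj = Nw l lam k (bs j)"
    define sj where "sj = lk (bs j) k"
    have NB: "Nw l lam k (bs' j) = Nj" unfolding Nj_def bs'_def by (rule Nw_cong) (simp add: lk_upd_k)
    have sB: "lk (bs' j) k = sj + dj j" unfolding sj_def bs'_def by (simp add: lk_upd_k)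
    have h1: "1 \<le> real Nj / real l + real sj / real \<mu>"
      using B1 j unfolding F(1) Nj_def sj_def \<mu>_def by blast
    show ?thesis
    proof (cases "l \<le> Nj")
      case True
      then have "dj j = 0" unfolding dj_def Nj_def by simp
      moreover have "1 \<le> real Nj / real l" using True l0 by simp
      moreover have "0 \<le> real (lk (bs' j) k) / (real (lam k) + real l)" by simp
      ultimately show ?thesis unfolding F(2)[of "bs' j"] NB sj_def by (intro conjI) (simp, linarith)
    next
      case False
      then have d: "real (dj j) = real l - real Nj" unfolding dj_def Nj_def by (simp add: of_nat_diff)
      have h0: "1 * real l * real \<mu> \<le> real Nj * real \<mu> + real sj * real l"
        using h1 \<mu>0 l0 frac_iff[of "real l" "real \<mu>"] by simp
      have e: "real \<mu> * real (dj j) = 1 * real l * real \<mu> - real Nj * real \<mu>"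
        unfolding d by (simp add: algebra_simps)
      have h2: "real \<mu> * real (dj j) \<le> real l * real sj"
        using h0 e by (simp add: algebra_simps)
      have e2: "(real \<mu> + real l) * real l = real Nj * (real \<mu> + real l) + real (dj j) * (real \<mu> + real l)"
        unfolding d by (simp add: algebra_simps)
      have "1 * real l * (real \<mu> + real l) \<le> real Nj * (real \<mu> + real l) + real (sj + dj j) * real l"
        using h2 e2 by (simp add: algebra_simps)
      then have "1 \<le> real Nj / real l + real (sj + dj j) / (real \<mu> + real l)"
        using \<mu>0 l0 frac_iff[of "real l" "real \<mu> + real l" 1 "real Nj" "real (sj + dj j)"] by simp
      then show ?thesis using h2 unfolding F(2)[of "bs' j"] NB sB sj_def \<mu>_def by simp
    qed
  qed
  show "\<exists>bs. (\<forall>j<m. 1 \<le> Fw lam' n (bs j)) \<and> (\<forall>i. (\<Sum>j<m. lk (bs j) i) \<le> lk a i)"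
  proof (intro exI conjI allI impI)
    show "1 \<le> Fw lam' n (bs' j)" if "j < m" for j using key that by blast
    fix i
    show "(\<Sum>j<m. lk (bs' j) i) \<le> lk a i"
    proof (cases "i = k")
      case False
      then have "(\<Sum>j<m. lk (bs' j) i) = (\<Sum>j<m. lk (bs j) i)" unfolding bs'_def by (simp add: lk_upd_k)
      also have "\<dots> \<le> lk a0 i" using B2 by blast
      also have "\<dots> = lk a i" using False by (simp add: lka0)
      finally show ?thesis .
    next
      case True
      define X where "X = (\<Sum>j<m. dj j)"
      define S where "S = (\<Sum>j<m. lk (bs j) k)"
      have St0: "S \<le> t0" using B2[rule_format, of k] unfolding S_def by (simp add: lka0)
      have sumN: "(\<Sum>j<m. Nw l lam k (bs j)) \<le> N" using Nw_sum_le[OF B2, of l lam k] N0 by simp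
      have "real \<mu> * real X \<le> real l * real S"
        unfolding X_def S_def of_nat_sum sum_distrib_left
        by (rule sum_mono) (use key in simp)
      also have "\<dots> \<le> real l * real t0" using St0 l0 by simp
      also have "\<dots> < real \<mu> * real \<delta> + real l" using t0lt l0 by (simp add: field_simps)
      also have "\<dots> \<le> real \<mu> * real \<delta> + real \<mu>" using lmu by simp
      finally have "real \<mu> * real X < real \<mu> * (real \<delta> + 1)" by (simp add: algebra_simps)
      then have "real X < real \<delta> + 1" using \<mu>0 by simp
      then have Xd: "X \<le> \<delta>" by linarith
      have "(\<Sum>j<m. lk (bs' j) k) = S + X" unfolding bs'_def S_def X_def by (simp add: lk_upd_k sum.distrib)
      also have "\<dots> \<le> t" using St0 Xd t0t by linarith
      finally show ?thesis using True t_def by simp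
    qed
  qed
qed




abbreviation ks where "ks \<equiv> Poly_Mapping.keys"

lemma keys_sum': "ks (sum b I) \<subseteq> (\<Union>i \<in>I. ks (b i))"
proof (induction I rule: infinite_finite_induct)
  case (insert i I)
  then show ?case
    using keys_add [of "b i" "sum b I"] by auto
qed auto

lemma keys_uminus': "ks (- (a :: 'b \<Rightarrow>\<^sub>0 'c::ab_group_add)) = ks a"
  by (auto simp: in_keys_iff)

lemma polyR_add: "p \<in> polyR n \<Longrightarrow> q \<in> polyR n \<Longrightarrow> p + q \<in> polyR n"
  unfolding polyR_def
proof (intro CollectI ballI)
  fix m assume p: "p \<in> {p. \<forall>m\<in>ks p. ks m \<subseteq> {..<n}}" and q: "q \<in> {p. \<forall>m\<in>ks p. ks m \<subseteq> {..<n}}"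
    and m: "m \<in> ks (p + q)"
  then have "m \<in> ks p \<or> m \<in> ks q" using keys_add[of p q] by blast
  then show "ks m \<subseteq> {..<n}" using p q by blast
qed

lemma polyR_mult: "p \<in> polyR n \<Longrightarrow> q \<in> polyR n \<Longrightarrow> p * q \<in> polyR n"
  unfolding polyR_def
proof (intro CollectI ballI)
  fix m assume p: "p \<in> {p. \<forall>m\<in>ks p. ks m \<subseteq> {..<n}}" and q: "q \<in> {p. \<forall>m\<in>ks p. ks m \<subseteq> {..<n}}"
    and m: "m \<in> ks (p * q)"
  then obtain x y where xy: "m = x + y" "x \<in> ks p" "y \<in> ks q" using keys_mult by blast
  then have "ks x \<subseteq> {..<n}" "ks y \<subseteq> {..<n}" using p q by auto
  then show "ks m \<subseteq> {..<n}" using keys_add[of x y] xy(1) by blast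
qed

lemma polyR_0: "0 \<in> polyR n" unfolding polyR_def by simp
lemma polyR_1: "1 \<in> polyR n" unfolding polyR_def by simp
lemma polyR_uminus: "p \<in> polyR n \<Longrightarrow> - p \<in> polyR n" unfolding polyR_def by (simp add: keys_uminus')
lemma polyR_single: "ks m \<subseteq> {..<n} \<Longrightarrow> sg m c \<in> polyR n" unfolding polyR_def by simp

lemma ideal_polyR: "is_ideal n (polyR n)"
  unfolding is_ideal_def by (simp add: polyR_0 polyR_add polyR_mult)

lemma ideal_sub: "is_ideal n I \<Longrightarrow> I \<subseteq> polyR n" unfolding is_ideal_def by blast
lemma ideal_0: "is_ideal n I \<Longrightarrow> 0 \<in> I" unfolding is_ideal_def by blast
lemma ideal_add: "is_ideal n I \<Longrightarrow> a \<in> I \<Longrightarrow> b \<in> I \<Longrightarrow> a + b \<in> I" unfolding is_ideal_def by blast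
lemma ideal_multL: "is_ideal n I \<Longrightarrow> r \<in> polyR n \<Longrightarrow> a \<in> I \<Longrightarrow> r * a \<in> I" unfolding is_ideal_def by blast
lemma ideal_multR: "is_ideal n I \<Longrightarrow> r \<in> polyR n \<Longrightarrow> a \<in> I \<Longrightarrow> a * r \<in> I"
  using ideal_multL[of n I r a] by (simp add: mult.commute)
lemma ideal_neg:
  assumes "is_ideal n I" "a \<in> I" shows "- a \<in> I"
proof -
  have "-1 \<in> polyR n" by (rule polyR_uminus[OF polyR_1])
  then have "(-1) * a \<in> I" using assms ideal_multL by blast
  then show ?thesis by simp
qed
lemma ideal_sum:
  assumes I: "is_ideal n I" shows "(\<forall>x\<in>A. f x \<in> I) \<Longrightarrow> sum f A \<in> I"
proof (induction A rule: infinite_finite_induct)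
  case (infinite A) then show ?case using ideal_0[OF I] by simp
next
  case empty then show ?case using ideal_0[OF I] by simp
next
  case (insert x F) then show ?case using ideal_add[OF I] by simp
qed

lemma gen_ideal:
  fixes S :: "'a::comm_ring_1 mpoly set"
  assumes "S \<subseteq> polyR n" shows "is_ideal n (ideal_gen n S)"
proof -
  let ?F = "{I. is_ideal n I \<and> S \<subseteq> I}"
  have fam: "polyR n \<in> ?F" using assms ideal_polyR by blast
  have 1: "\<Inter>?F \<subseteq> polyR n" using fam by blast
  have 2: "0 \<in> \<Inter>?F"
  proof (rule InterI)
    fix I :: "'a mpoly set" assume "I \<in> ?F" then show "0 \<in> I" by - (rule ideal_0, blast)
  qed
  have 3: "\<forall>a\<in>\<Inter>?F. \<forall>b\<in>\<Inter>?F. a + b \<in> \<Inter>?F"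
  proof (intro ballI InterI)
    fix a b :: "'a mpoly" and I assume "a \<in> \<Inter>?F" "b \<in> \<Inter>?F" "I \<in> ?F"
    then show "a + b \<in> I" using ideal_add[of n I a b] by simp
  qed
  have 4: "\<forall>r\<in>polyR n. \<forall>a\<in>\<Inter>?F. r * a \<in> \<Inter>?F"
  proof (intro ballI InterI)
    fix r a :: "'a mpoly" and I assume "r \<in> polyR n" "a \<in> \<Inter>?F" "I \<in> ?F"
    then show "r * a \<in> I" using ideal_multL[of n I r a] by simp
  qed
  have "is_ideal n (\<Inter>?F)" using 1 2 3 4 by (subst is_ideal_def) (intro conjI)
  then show ?thesis unfolding ideal_gen_def .
qed

lemma gen_sup: "S \<subseteq> ideal_gen n S" unfolding ideal_gen_def by blast
lemma gen_least: "is_ideal n T \<Longrightarrow> S \<subseteq> T \<Longrightarrow> ideal_gen n S \<subseteq> T" unfolding ideal_gen_def by blast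

lemma gen_multR:
  assumes T: "is_ideal n T" and d: "d \<in> polyR n" and S: "S \<subseteq> polyR n" and gen: "\<forall>s\<in>S. s * d \<in> T"
    and c: "c \<in> ideal_gen n S"
  shows "c * d \<in> T"
proof -
  let ?T = "{c \<in> polyR n. c * d \<in> T}"
  have "is_ideal n ?T" unfolding is_ideal_def
  proof (intro conjI ballI)
    show "?T \<subseteq> polyR n" by blast
    show "0 \<in> ?T" using T by (simp add: polyR_0 ideal_0)
    show "a + b \<in> ?T" if "a \<in> ?T" "b \<in> ?T" for a b
      using that T polyR_add[of a n b] ideal_add[of n T "a * d" "b * d"] by (simp add: distrib_right)
    show "r * a \<in> ?T" if "r \<in> polyR n" "a \<in> ?T" for r a
      using that T polyR_mult[of r n a] ideal_multL[of n T r "a * d"] by (simp add: mult.assoc)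
  qed
  moreover have "S \<subseteq> ?T" using S gen by blast
  ultimately have "ideal_gen n S \<subseteq> ?T" by (rule gen_least)
  then show ?thesis using c by blast
qed

lemma pow_ideal: "Q \<subseteq> polyR n \<Longrightarrow> is_ideal n (ideal_pow n Q k)"
proof (induction k)
  case 0 then show ?case by (simp add: ideal_polyR)
next
  case (Suc k)
  then have "ideal_pow n Q k \<subseteq> polyR n" by (simp add: ideal_sub)
  then have "{a * b |a b. a \<in> ideal_pow n Q k \<and> b \<in> Q} \<subseteq> polyR n" using Suc.prems polyR_mult by blast
  then show ?case by (simp add: ideal_mult_def gen_ideal)
qed

lemma pow_sub: "Q \<subseteq> polyR n \<Longrightarrow> ideal_pow n Q k \<subseteq> polyR n"
  using pow_ideal ideal_sub by blast

lemma gen_in: "x \<in> S \<Longrightarrow> x \<in> ideal_gen n S"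
  using gen_sup by (rule subsetD)

lemma pow_step:
  assumes "p \<in> ideal_pow n Q k" "q \<in> Q" shows "p * q \<in> ideal_pow n Q (Suc k)"
proof -
  have "p * q \<in> {a * b |a b. a \<in> ideal_pow n Q k \<and> b \<in> Q}" using assms by blast
  then have "p * q \<in> ideal_gen n {a * b |a b. a \<in> ideal_pow n Q k \<and> b \<in> Q}" by (rule gen_in)
  then show ?thesis by (simp add: ideal_mult_def)
qed

lemma pow_prod: "\<forall>j<k. f j \<in> Q \<Longrightarrow> (\<Prod>j<k. f j) \<in> ideal_pow n Q k"
proof (induction k)
  case 0 then show ?case by (simp add: polyR_1)
next
  case (Suc k)
  then have "(\<Prod>j<k. f j) * f k \<in> ideal_pow n Q (Suc k)" by (intro pow_step) auto
  then show ?case by simp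
qed

lemma pow_power: "q \<in> Q \<Longrightarrow> q ^ k \<in> ideal_pow n Q k"
  using pow_prod[of k "\<lambda>_. q" Q n] by simp

lemma pow_Suc_sub:
  assumes Q: "Q \<subseteq> polyR n" shows "ideal_pow n Q (Suc k) \<subseteq> ideal_pow n Q k"
proof -
  have "ideal_pow n Q (Suc k) = ideal_gen n {a * b |a b. a \<in> ideal_pow n Q k \<and> b \<in> Q}"
    by (simp add: ideal_mult_def)
  also have "\<dots> \<subseteq> ideal_pow n Q k"
  proof (rule gen_least[OF pow_ideal[OF Q]], rule subsetI)
    fix x assume "x \<in> {a * b |a b. a \<in> ideal_pow n Q k \<and> b \<in> Q}"
    then obtain a b where ab: "x = a * b" "a \<in> ideal_pow n Q k" "b \<in> Q" by blast
    have "b \<in> polyR n" using ab(3) Q by blast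
    then show "x \<in> ideal_pow n Q k" unfolding ab(1) using ideal_multR[OF pow_ideal[OF Q] _ ab(2)] by blast
  qed
  finally show ?thesis .
qed

lemma pow_antimono:
  assumes Q: "Q \<subseteq> polyR n" and "k \<le> k'" shows "ideal_pow n Q k' \<subseteq> ideal_pow n Q k"
  using assms(2)
proof (induction k' rule: dec_induct)
  case (step k') then show ?case using pow_Suc_sub[OF Q, of k'] by blast
qed simp

lemma pow_mult:
  assumes Q: "Q \<subseteq> polyR n"
  shows "p \<in> ideal_pow n Q a \<Longrightarrow> q \<in> ideal_pow n Q b \<Longrightarrow> p * q \<in> ideal_pow n Q (a + b)"
proof (induction b arbitrary: q)
  case 0
  then show ?case using pow_ideal[OF Q, of a] by (simp add: ideal_multR)
next
  case (Suc b)
  have S: "{c * d |c d. c \<in> ideal_pow n Q b \<and> d \<in> Q} \<subseteq> polyR n"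
    using pow_sub[OF Q, of b] Q polyR_mult by blast
  have p: "p \<in> polyR n" using Suc.prems(1) pow_sub[OF Q] by blast
  have "q * p \<in> ideal_pow n Q (a + Suc b)"
  proof (rule gen_multR[OF pow_ideal[OF Q] p S])
    show "\<forall>s\<in>{c * d |c d. c \<in> ideal_pow n Q b \<and> d \<in> Q}. s * p \<in> ideal_pow n Q (a + Suc b)"
    proof safe
      fix c d assume c: "c \<in> ideal_pow n Q b" and d: "d \<in> Q"
      have "p * c \<in> ideal_pow n Q (a + b)" using Suc.IH[OF Suc.prems(1) c] .
      then have "(p * c) * d \<in> ideal_pow n Q (Suc (a + b))" using d by (rule pow_step)
      then show "c * d * p \<in> ideal_pow n Q (a + Suc b)" by (simp add: ac_simps)
    qed
    show "q \<in> ideal_gen n {c * d |c d. c \<in> ideal_pow n Q b \<and> d \<in> Q}"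
      using Suc.prems(2) by (simp add: ideal_mult_def)
  qed
  then show ?case by (simp add: mult.commute)
qed

lemma pow_prod_gen:
  assumes Q: "Q \<subseteq> polyR n" and A: "finite A"
  shows "(\<forall>i\<in>A. f i \<in> ideal_pow n Q (e i)) \<Longrightarrow> (\<Prod>i\<in>A. f i) \<in> ideal_pow n Q (\<Sum>i\<in>A. e i)"
  using A
proof (induction A rule: finite_induct)
  case empty then show ?case by (simp add: polyR_1)
next
  case (insert x F)
  then show ?case using pow_mult[OF Q] by simp
qed

lemma pow_pow:
  fixes Q :: "'a::comm_ring_1 mpoly set"
  assumes Q: "Q \<subseteq> polyR n"
  shows "ideal_pow n Q (m * k) \<subseteq> ideal_pow n (ideal_pow n Q m) k"
proof (induction k)
  case 0 then show ?case by simp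
next
  case (Suc k)
  let ?A = "ideal_pow n (ideal_pow n Q m) k"
  have Qm: "ideal_pow n Q m \<subseteq> polyR n" by (rule pow_sub[OF Q])
  have A: "?A \<subseteq> polyR n" by (rule pow_sub[OF Qm])
  define B where "B j = ideal_gen n {e * f |e f. e \<in> ?A \<and> f \<in> ideal_pow n Q j}" for j
  have Sj: "{e * f |e f. e \<in> ?A \<and> f \<in> ideal_pow n Q j} \<subseteq> polyR n" for j
    using A pow_sub[OF Q, of j] polyR_mult by blast
  have Bi: "is_ideal n (B j)" for j unfolding B_def by (rule gen_ideal[OF Sj])
  have "ideal_pow n Q (m * k + j) \<subseteq> B j" for j
  proof (induction j)
    case 0
    show ?case
    proof
      fix x assume "x \<in> ideal_pow n Q (m * k + 0)"
      then have "x \<in> ?A" using Suc.IH by auto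
      moreover have "(1::'a mpoly) \<in> ideal_pow n Q 0" by (simp add: polyR_1)
      ultimately have "x * 1 \<in> {e * f |e f. e \<in> ?A \<and> f \<in> ideal_pow n Q 0}" by blast
      then show "x \<in> B 0" unfolding B_def by (simp add: gen_in)
    qed
  next
    case (Suc j)
    have "ideal_pow n Q (m * k + Suc j) = ideal_gen n {c * d |c d. c \<in> ideal_pow n Q (m * k + j) \<and> d \<in> Q}"
      by (simp add: ideal_mult_def)
    also have "\<dots> \<subseteq> B (Suc j)"
    proof (rule gen_least[OF Bi], safe)
      fix c d assume c: "c \<in> ideal_pow n Q (m * k + j)" and d: "d \<in> Q"
      have cB: "c \<in> B j" using c Suc.IH by blast
      show "c * d \<in> B (Suc j)"
      proof (rule gen_multR[OF Bi _ Sj])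
        show "d \<in> polyR n" using d Q by blast
        show "c \<in> ideal_gen n {e * f |e f. e \<in> ?A \<and> f \<in> ideal_pow n Q j}" using cB unfolding B_def .
        show "\<forall>s\<in>{e * f |e f. e \<in> ?A \<and> f \<in> ideal_pow n Q j}. s * d \<in> B (Suc j)"
        proof safe
          fix e f assume e: "e \<in> ?A" and f: "f \<in> ideal_pow n Q j"
          have "f * d \<in> ideal_pow n Q (Suc j)" using f d by (rule pow_step)
          then have "e * (f * d) \<in> {e * f |e f. e \<in> ?A \<and> f \<in> ideal_pow n Q (Suc j)}" using e by blast
          then show "e * f * d \<in> B (Suc j)" unfolding B_def by (simp add: gen_in mult.assoc)
        qed
      qed
    qed
    finally show ?case .
  qed
  from this[of m] show ?case by (simp add: B_def ideal_mult_def add.commute)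
qed




definition GEw :: "((nat \<Rightarrow>\<^sub>0 nat) \<Rightarrow> real) \<Rightarrow> 'a::comm_ring_1 mpoly \<Rightarrow> real \<Rightarrow> bool" where
  "GEw w p r \<longleftrightarrow> (\<forall>x\<in>ks p. r \<le> w x)"
definition GTw :: "((nat \<Rightarrow>\<^sub>0 nat) \<Rightarrow> real) \<Rightarrow> 'a::comm_ring_1 mpoly \<Rightarrow> real \<Rightarrow> bool" where
  "GTw w p r \<longleftrightarrow> (\<forall>x\<in>ks p. r < w x)"
definition EQw :: "((nat \<Rightarrow>\<^sub>0 nat) \<Rightarrow> real) \<Rightarrow> 'a::comm_ring_1 mpoly \<Rightarrow> real \<Rightarrow> bool" where
  "EQw w p r \<longleftrightarrow> (\<forall>x\<in>ks p. w x = r)"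

lemma keys_mult_obtain:
  assumes "z \<in> ks (p * q)" obtains x y where "z = x + y" "x \<in> ks p" "y \<in> ks q"
  using assms keys_mult[of p q] by blast

context
  fixes w :: "(nat \<Rightarrow>\<^sub>0 nat) \<Rightarrow> real"
  assumes wadd: "\<And>x y. w (x + y) = w x + w y"
begin

lemma w0: "w 0 = 0" using wadd[of 0 0] by simp

lemma GE_mult: "GEw w p r \<Longrightarrow> GEw w q s \<Longrightarrow> GEw w (p * q) (r + s)"
  unfolding GEw_def
proof
  fix z assume p: "\<forall>x\<in>ks p. r \<le> w x" and q: "\<forall>x\<in>ks q. s \<le> w x" and z: "z \<in> ks (p * q)"
  obtain x y where "z = x + y" "x \<in> ks p" "y \<in> ks q" using z by (rule keys_mult_obtain)
  then show "r + s \<le> w z" using p q wadd by (simp add: add_mono)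
qed

lemma GT_mult1: "GTw w p r \<Longrightarrow> GEw w q s \<Longrightarrow> GTw w (p * q) (r + s)"
  unfolding GEw_def GTw_def
proof
  fix z assume p: "\<forall>x\<in>ks p. r < w x" and q: "\<forall>x\<in>ks q. s \<le> w x" and z: "z \<in> ks (p * q)"
  obtain x y where "z = x + y" "x \<in> ks p" "y \<in> ks q" using z by (rule keys_mult_obtain)
  then show "r + s < w z" using p q wadd by (simp add: add_less_le_mono)
qed

lemma GT_mult2: "GEw w p r \<Longrightarrow> GTw w q s \<Longrightarrow> GTw w (p * q) (r + s)"
  using GT_mult1[of q s p r] by (simp add: mult.commute add.commute)

lemma EQ_mult: "EQw w p r \<Longrightarrow> EQw w q s \<Longrightarrow> EQw w (p * q) (r + s)"
  unfolding EQw_def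
proof
  fix z assume p: "\<forall>x\<in>ks p. w x = r" and q: "\<forall>x\<in>ks q. w x = s" and z: "z \<in> ks (p * q)"
  obtain x y where "z = x + y" "x \<in> ks p" "y \<in> ks q" using z by (rule keys_mult_obtain)
  then show "w z = r + s" using p q wadd by simp
qed

lemma EQ_pow: "EQw w p r \<Longrightarrow> EQw w (p ^ j) (real j * r)"
proof (induction j)
  case 0 then show ?case by (simp add: EQw_def w0)
next
  case (Suc j)
  then have "EQw w (p * p ^ j) (r + real j * r)" using EQ_mult by blast
  then show ?case by (simp add: algebra_simps)
qed

lemma GE_pow: "GEw w p r \<Longrightarrow> GEw w (p ^ j) (real j * r)"
proof (induction j)
  case 0 then show ?case by (simp add: GEw_def w0)
next
  case (Suc j)
  then have "GEw w (p * p ^ j) (r + real j * r)" using GE_mult by blast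
  then show ?case by (simp add: algebra_simps)
qed

lemma EQ_GE: "EQw w p r \<Longrightarrow> GEw w p r" unfolding EQw_def GEw_def by simp
lemma GT_GE: "GTw w p r \<Longrightarrow> GEw w p r" unfolding GTw_def GEw_def by (simp add: less_imp_le)
lemma GE_GT: "GEw w p r \<Longrightarrow> s < r \<Longrightarrow> GTw w p s" unfolding GTw_def GEw_def by fastforce
lemma GT_add: "GTw w p r \<Longrightarrow> GTw w q r \<Longrightarrow> GTw w (p + q) r"
  unfolding GTw_def using keys_add[of p q] by blast
lemma GT_0: "GTw w 0 r" unfolding GTw_def by simp
lemma GT_sum: "(\<forall>i\<in>A. GTw w (f i) r) \<Longrightarrow> GTw w (sum f A) r"
  by (induction A rule: infinite_finite_induct) (auto simp: GT_0 GT_add)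

lemma val:
  fixes f :: "'a::field mpoly" and c :: real
  assumes k1: "k \<ge> 1"
    and A: "\<forall>i\<in>{1..k}. GEw w (a i) (real i * c)"
    and eq: "f ^ k + (\<Sum>i=1..k. a i * f ^ (k - i)) = 0"
  shows "GEw w f c"
proof (rule ccontr)
  assume "\<not> GEw w f c"
  then obtain x0 where x0: "x0 \<in> ks f" "w x0 < c" unfolding GEw_def by auto
  define v where "v = Min (w ` ks f)"
  have fin: "finite (w ` ks f)" by simp
  have vle: "v \<le> w x" if "x \<in> ks f" for x unfolding v_def using fin that by simp
  have "v \<in> w ` ks f" unfolding v_def using fin x0(1) by (intro Min_in) auto
  then obtain xm where xm: "xm \<in> ks f" "w xm = v" by blast
  have vc: "v < c" using vle[OF x0(1)] x0(2) by simp
  define h where "h = (\<Sum>x\<in>{x\<in>ks f. w x = v}. sg x (lk f x))"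
  define g where "g = f - h"
  have lkh: "lk h y = (if y \<in> ks f \<and> w y = v then lk f y else 0)" for y
    unfolding h_def lookup_sum by (simp add: lookup_single when_def)
  have EQh: "EQw w h v" unfolding EQw_def
  proof
    fix y assume "y \<in> ks h"
    then have "lk h y \<noteq> 0" by (simp add: in_keys_iff)
    then show "w y = v" using lkh[of y] by (auto split: if_splits)
  qed
  have h0: "h \<noteq> 0"
  proof
    assume "h = 0"
    then have "lk h xm = 0" by simp
    then show False using lkh[of xm] xm by (simp add: in_keys_iff)
  qed
  have GTg: "GTw w g v" unfolding GTw_def
  proof
    fix y assume "y \<in> ks g"
    then have ne: "lk f y - lk h y \<noteq> 0" unfolding g_def by (simp add: in_keys_iff lookup_minus)
    have "y \<in> ks f"
    proof (rule ccontr)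
      assume "y \<notin> ks f" then show False using ne lkh[of y] by (simp add: in_keys_iff)
    qed
    moreover have "w y \<noteq> v" using ne lkh[of y] calculation by auto
    ultimately show "v < w y" using vle by force
  qed
  have GEf: "GEw w f v" unfolding GEw_def using vle by blast
  have fhg: "f = h + g" unfolding g_def by simp
  have pw: "\<exists>R. f ^ j = h ^ j + R \<and> GTw w R (real j * v)" for j
  proof (induction j)
    case 0 then show ?case by (intro exI[of _ 0]) (simp add: GT_0)
  next
    case (Suc j)
    then obtain R where R: "f ^ j = h ^ j + R" "GTw w R (real j * v)" by blast
    have "f ^ Suc j = h ^ Suc j + (h * R + g * h ^ j + g * R)"
      unfolding power_Suc R(1) by (subst fhg) (simp add: algebra_simps)
    moreover have "GTw w (h * R + g * h ^ j + g * R) (real (Suc j) * v)"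
    proof -
      have e: "real (Suc j) * v = v + real j * v" by (simp add: algebra_simps)
      have 1: "GTw w (h * R) (v + real j * v)" using GT_mult2[OF EQ_GE[OF EQh] R(2)] .
      have 2: "GTw w (g * h ^ j) (v + real j * v)"
        using GT_mult1[OF GTg EQ_GE[OF EQ_pow[OF EQh]]] .
      have 3: "GTw w (g * R) (v + real j * v)" using GT_mult1[OF GTg GT_GE[OF R(2)]] .
      show ?thesis unfolding e using 1 2 3 by (intro GT_add)
    qed
    ultimately show ?case by blast
  qed
  obtain R where R: "f ^ k = h ^ k + R" "GTw w R (real k * v)" using pw by blast
  have Sum: "GTw w (\<Sum>i=1..k. a i * f ^ (k - i)) (real k * v)"
  proof (rule GT_sum, rule ballI)
    fix i assume i: "i \<in> {1..k}"
    have "GEw w (a i * f ^ (k - i)) (real i * c + real (k - i) * v)"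
      using GE_mult[OF A[rule_format, OF i] GE_pow[OF GEf]] .
    moreover have "real k * v < real i * c + real (k - i) * v"
    proof -
      have "real (k - i) = real k - real i" using i by (simp add: of_nat_diff)
      moreover have "real i * v < real i * c" using i vc by simp
      ultimately show ?thesis by (simp add: algebra_simps)
    qed
    ultimately show "GTw w (a i * f ^ (k - i)) (real k * v)" by (rule GE_GT)
  qed
  define R' where "R' = R + (\<Sum>i=1..k. a i * f ^ (k - i))"
  have GTR': "GTw w R' (real k * v)" unfolding R'_def using R(2) Sum by (rule GT_add)
  have z: "h ^ k + R' = 0" using eq R(1) unfolding R'_def by (simp add: add.assoc)
  have "h ^ k \<noteq> 0" using h0 by simp
  then obtain y where y: "y \<in> ks (h ^ k)" by (metis keys_eq_empty ex_in_conv)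
  have wy: "w y = real k * v" using EQ_pow[OF EQh, of k] y unfolding EQw_def by blast
  have "y \<notin> ks R'" using GTR' wy unfolding GTw_def by fastforce
  then have "lk R' y = 0" by (simp add: in_keys_iff)
  moreover have "lk (h ^ k) y \<noteq> 0" using y by (simp add: in_keys_iff)
  ultimately have "lk (h ^ k + R') y \<noteq> 0" by (simp add: lookup_add)
  then show False using z by simp
qed

end




definition Mon :: "nat \<Rightarrow> (nat \<Rightarrow>\<^sub>0 nat) set \<Rightarrow> 'a::comm_ring_1 mpoly set" where
  "Mon n U = {p \<in> polyR n. ks p \<subseteq> U}"

definition Wset :: "(nat \<Rightarrow> nat) \<Rightarrow> nat \<Rightarrow> real \<Rightarrow> (nat \<Rightarrow>\<^sub>0 nat) set" where
  "Wset lam n r = {x. r \<le> Fw lam n x}"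

definition Mset :: "(nat \<Rightarrow> nat) \<Rightarrow> nat \<Rightarrow> nat \<Rightarrow> (nat \<Rightarrow>\<^sub>0 nat) set" where
  "Mset lam n j = {x. \<exists>bs. (\<forall>i<j. 1 \<le> Fw lam n (bs i)) \<and> (\<forall>z. (\<Sum>i<j. lk (bs i) z) \<le> lk x z)}"

lemma Fw_add: "Fw lam n (x + y) = Fw lam n x + Fw lam n y"
  unfolding Fw_def by (simp add: lookup_add add_divide_distrib sum.distrib)

lemma Fw_nonneg: "0 \<le> Fw lam n x"
  unfolding Fw_def by (simp add: sum_nonneg)

lemma Fw_single:
  assumes "i < n" shows "Fw lam n (sg i k) = real k / real (lam i)"
proof -
  have "Fw lam n (sg i k) = (\<Sum>j<n. if i = j then real k / real (lam j) else 0)"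
    unfolding Fw_def by (rule sum.cong) (auto simp: lookup_single when_def)
  then show ?thesis using assms by simp
qed

lemma Mon_ideal:
  assumes up: "\<forall>x\<in>U. \<forall>y. x + y \<in> U"
  shows "is_ideal n (Mon n U :: 'a::comm_ring_1 mpoly set)"
proof -
  have 1: "(Mon n U :: 'a mpoly set) \<subseteq> polyR n" unfolding Mon_def by blast
  have 2: "0 \<in> (Mon n U :: 'a mpoly set)" unfolding Mon_def by (simp add: polyR_0)
  have 3: "\<forall>a\<in>(Mon n U :: 'a mpoly set). \<forall>b\<in>Mon n U. a + b \<in> Mon n U"
  proof (intro ballI)
    fix a b :: "'a mpoly" assume a: "a \<in> Mon n U" and b: "b \<in> Mon n U"
    have "a + b \<in> polyR n" using a b unfolding Mon_def by (simp add: polyR_add)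
    moreover have "ks (a + b) \<subseteq> U" using a b keys_add[of a b] unfolding Mon_def by blast
    ultimately show "a + b \<in> Mon n U" unfolding Mon_def by blast
  qed
  have 4: "\<forall>r\<in>polyR n. \<forall>a\<in>(Mon n U :: 'a mpoly set). r * a \<in> Mon n U"
  proof (intro ballI)
    fix r a :: "'a mpoly" assume r: "r \<in> polyR n" and a: "a \<in> Mon n U"
    have "r * a \<in> polyR n" using r a unfolding Mon_def by (simp add: polyR_mult)
    moreover have "ks (r * a) \<subseteq> U"
    proof
      fix z assume z: "z \<in> ks (r * a)"
      obtain x y where xy: "z = x + y" "x \<in> ks r" "y \<in> ks a" using z by (rule keys_mult_obtain)
      then have "y \<in> U" using a unfolding Mon_def by blast
      then have "y + x \<in> U" using up by blast
      then show "z \<in> U" using xy(1) by (simp add: add.commute)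
    qed
    ultimately show "r * a \<in> Mon n U" unfolding Mon_def by blast
  qed
  show ?thesis using 1 2 3 4 by (subst is_ideal_def) (intro conjI)
qed

lemma Mon_mult:
  assumes Z: "\<forall>x\<in>U. \<forall>y\<in>V. x + y \<in> Z" and p: "p \<in> Mon n U" and q: "q \<in> Mon n V"
  shows "p * q \<in> Mon n Z"
proof -
  have "p * q \<in> polyR n" using p q unfolding Mon_def by (simp add: polyR_mult)
  moreover have "ks (p * q) \<subseteq> Z"
  proof
    fix z assume z: "z \<in> ks (p * q)"
    obtain x y where xy: "z = x + y" "x \<in> ks p" "y \<in> ks q" using z by (rule keys_mult_obtain)
    then have "x \<in> U" "y \<in> V" using p q unfolding Mon_def by blast+
    then show "z \<in> Z" using Z xy(1) by blast
  qed
  ultimately show ?thesis unfolding Mon_def by blast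
qed

lemma pow_Mon:
  fixes Q :: "'a::comm_ring_1 mpoly set"
  assumes Q: "Q \<subseteq> Mon n U1"
    and up: "\<forall>j. \<forall>x\<in>Uf j. \<forall>y. x + y \<in> Uf j"
    and z: "\<forall>x. x \<in> Uf 0"
    and st: "\<forall>j. \<forall>x\<in>Uf j. \<forall>y\<in>U1. x + y \<in> Uf (Suc j)"
  shows "ideal_pow n Q j \<subseteq> Mon n (Uf j)"
proof (induction j)
  case 0 show ?case using z unfolding Mon_def by auto
next
  case (Suc j)
  have "ideal_pow n Q (Suc j) = ideal_gen n {a * b |a b. a \<in> ideal_pow n Q j \<and> b \<in> Q}"
    by (simp add: ideal_mult_def)
  also have "\<dots> \<subseteq> Mon n (Uf (Suc j))"
  proof (rule gen_least[OF Mon_ideal], rule spec[OF up], rule subsetI)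
    fix x assume "x \<in> {a * b |a b. a \<in> ideal_pow n Q j \<and> b \<in> Q}"
    then obtain a b where ab: "x = a * b" "a \<in> ideal_pow n Q j" "b \<in> Q" by blast
    have "a \<in> Mon n (Uf j)" using ab(2) Suc.IH by blast
    moreover have "b \<in> Mon n U1" using ab(3) Q by blast
    ultimately show "x \<in> Mon n (Uf (Suc j))" unfolding ab(1) using st by (intro Mon_mult) auto
  qed
  finally show ?case .
qed

lemma mvar_pow: "(mvar i :: 'a::comm_ring_1 mpoly) ^ k = sg (sg i k) 1"
proof (induction k)
  case 0 then show ?case by simp
next
  case (Suc k)
  then show ?case by (simp add: mvar_def mult_single single_add[symmetric])
qed

lemma prod_single:
  "finite A \<Longrightarrow> (\<Prod>i\<in>A. sg (e i) (1::'a::comm_ring_1)) = sg (\<Sum>i\<in>A. e i) 1"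
  by (induction A rule: finite_induct) (simp_all add: mult_single)

lemma power_single: "(sg b (1::'a::comm_ring_1)) ^ K = sg (\<Sum>j<K. b) 1"
  using prod_single[of "{..<K}" "\<lambda>_. b"] by simp

lemma monom_in_pow:
  fixes Q :: "'a::comm_ring_1 mpoly set"
  assumes pos: "\<forall>i<n. lam i > 0" and kb: "ks b \<subseteq> {..<n}" and Q: "Q \<subseteq> polyR n"
    and gens: "\<forall>i<n. mvar i ^ lam i \<in> Q" and F: "real m \<le> Fw lam n b"
  shows "(sg b (1::'a)) ^ (\<Prod>i<n. lam i) \<in> ideal_pow n Q (m * (\<Prod>i<n. lam i))"
proof -
  define L where "L = (\<Prod>i<n. lam i)"
  have L0: "L > 0" unfolding L_def using pos by (simp add: prod_pos)
  have dvdL: "lam i dvd L" if "i < n" for i unfolding L_def using that by (intro dvd_prodI) auto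
  define c where "c i = lk b i * (L div lam i)" for i
  have lc: "lam i * c i = lk b i * L" if "i < n" for i
    using dvdL[OF that] unfolding c_def by (simp add: algebra_simps)
  have eqexp: "(\<Sum>j<L. b) = (\<Sum>i<n. sg i (lam i * c i))"
  proof (rule poly_mapping_eqI)
    fix z
    have "lk (\<Sum>j<L. b) z = L * lk b z" unfolding lookup_sum by simp
    also have "\<dots> = lk (\<Sum>i<n. sg i (lam i * c i)) z"
    proof (cases "z < n")
      case True
      then show ?thesis using lc[OF True] by (simp add: lookup_sum lookup_single when_def)
    next
      case False
      then have "lk b z = 0" using kb by (auto simp: in_keys_iff)
      then show ?thesis using False by (simp add: lookup_sum lookup_single when_def)
    qed
    finally show "lk (\<Sum>j<L. b) z = lk (\<Sum>i<n. sg i (lam i * c i)) z" .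
  qed
  have "(sg b (1::'a)) ^ L = (\<Prod>i<n. sg (sg i (lam i * c i)) (1::'a))"
    unfolding power_single eqexp by (simp add: prod_single)
  also have "\<dots> = (\<Prod>i<n. (mvar i ^ lam i) ^ c i)"
  proof (rule prod.cong[OF refl])
    fix i
    have "(mvar i ^ lam i) ^ c i = (mvar i :: 'a mpoly) ^ (lam i * c i)" by (rule power_mult[symmetric])
    also have "\<dots> = sg (sg i (lam i * c i)) 1" by (rule mvar_pow)
    finally show "sg (sg i (lam i * c i)) (1::'a) = (mvar i ^ lam i) ^ c i" by (rule sym)
  qed
  finally have e: "(sg b (1::'a)) ^ L = (\<Prod>i<n. (mvar i ^ lam i) ^ c i)" .
  have "(\<Prod>i<n. (mvar i ^ lam i) ^ c i) \<in> ideal_pow n Q (\<Sum>i<n. c i)"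
    using gens by (intro pow_prod_gen[OF Q]) (auto intro: pow_power)
  moreover have "m * L \<le> (\<Sum>i<n. c i)"
  proof -
    have "real (\<Sum>i<n. c i) = real L * Fw lam n b"
      unfolding Fw_def of_nat_sum sum_distrib_left
    proof (rule sum.cong[OF refl])
      fix i assume "i \<in> {..<n}"
      then have "lam i dvd L" "lam i > 0" using dvdL pos by auto
      then show "real (c i) = real L * (real (lk b i) / real (lam i))"
        unfolding c_def by (simp add: real_of_nat_div)
    qed
    also have "\<dots> \<ge> real L * real m" using F L0 by simp
    finally have "real (m * L) \<le> real (\<Sum>i<n. c i)" by (simp add: mult.commute)
    then show ?thesis by linarith
  qed
  ultimately have "(\<Prod>i<n. (mvar i ^ lam i) ^ c i) \<in> ideal_pow n Q (m * L)"
    using pow_antimono[OF Q] by blast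
  then show ?thesis using e unfolding L_def by simp
qed

lemma IC_of_pow:
  fixes Q :: "'a::comm_ring_1 mpoly set"
  assumes Q: "Q \<subseteq> polyR n" and y: "y \<in> polyR n" and K: "K \<ge> 1" and yK: "y ^ K \<in> ideal_pow n Q K"
  shows "y \<in> int_closure n Q"
proof -
  define a where "a i = (if i = K then - (y ^ K) else 0)" for i
  have "\<forall>i\<in>{1..K}. a i \<in> ideal_pow n Q i"
  proof
    fix i assume "i \<in> {1..K}"
    show "a i \<in> ideal_pow n Q i"
    proof (cases "i = K")
      case True then show ?thesis unfolding a_def using ideal_neg[OF pow_ideal[OF Q] yK] by simp
    next
      case False then show ?thesis unfolding a_def using ideal_0[OF pow_ideal[OF Q]] by simp
    qed
  qed
  moreover have "y ^ K + (\<Sum>i=1..K. a i * y ^ (K - i)) = 0"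
  proof -
    have "(\<Sum>i=1..K. a i * y ^ (K - i)) = (\<Sum>i\<in>{1..K}. if i = K then - (y ^ K) else 0)"
      by (rule sum.cong) (auto simp: a_def)
    also have "\<dots> = - (y ^ K)" using K by simp
    finally show ?thesis by simp
  qed
  ultimately show ?thesis unfolding int_closure_def using y K by blast
qed

lemma sup_IC:
  fixes Q :: "'a::comm_ring_1 mpoly set"
  assumes Q: "Q \<subseteq> polyR n" shows "Q \<subseteq> int_closure n Q"
proof
  fix y assume y: "y \<in> Q"
  have "1 * y \<in> ideal_pow n Q (Suc 0)" using y by (intro pow_step) (simp_all add: polyR_1)
  then show "y \<in> int_closure n Q" using Q y by (intro IC_of_pow[of Q n y 1]) auto
qed




lemma pow_W:
  fixes Q :: "'a::comm_ring_1 mpoly set"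
  assumes Q: "Q \<subseteq> Mon n (Wset lam n r)" and r: "r \<ge> 0"
  shows "ideal_pow n Q j \<subseteq> Mon n (Wset lam n (real j * r))"
proof (rule pow_Mon[OF Q])
  show "\<forall>j. \<forall>x\<in>Wset lam n (real j * r). \<forall>y. x + y \<in> Wset lam n (real j * r)"
    unfolding Wset_def using Fw_nonneg by (auto simp: Fw_add add_increasing2)
  show "\<forall>x. x \<in> Wset lam n (real 0 * r)" unfolding Wset_def using Fw_nonneg by simp
  show "\<forall>j. \<forall>x\<in>Wset lam n (real j * r). \<forall>y\<in>Wset lam n r. x + y \<in> Wset lam n (real (Suc j) * r)"
    unfolding Wset_def by (auto simp: Fw_add algebra_simps add_mono)
qed

lemma MonW_GE: "p \<in> Mon n (Wset lam n r) \<Longrightarrow> GEw (Fw lam n) p r"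
  unfolding Mon_def Wset_def GEw_def by blast

lemma GE_MonW: "p \<in> polyR n \<Longrightarrow> GEw (Fw lam n) p r \<Longrightarrow> p \<in> Mon n (Wset lam n r)"
  unfolding Mon_def Wset_def GEw_def by blast

lemma normal_iff:
  fixes lam :: "nat \<Rightarrow> nat" and n :: nat
  assumes pos: "\<forall>i<n. lam i > 0"
  shows "normal_ideal n (I_ideal n lam :: 'a::field mpoly set) \<longleftrightarrow> Comb n lam"
proof -
  define G :: "'a mpoly set" where "G = {mvar i ^ lam i |i. i < n}"
  define J where "J = ideal_gen n G"
  define I where "I = int_closure n J"
  define L where "L = (\<Prod>i<n. lam i)"
  have L1: "L \<ge> 1" unfolding L_def using pos by (simp add: prod_pos Suc_le_eq)
  have IJ: "I_ideal n lam = I" unfolding I_ideal_def J_ideal_def I_def J_def G_def ..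
  have mv: "(mvar i :: 'a mpoly) ^ lam i = sg (sg i (lam i)) 1" for i by (rule mvar_pow)
  have kmv: "i < n \<Longrightarrow> ks (sg i (lam i)) \<subseteq> {..<n}" for i by simp
  have Gp: "G \<subseteq> polyR n"
  proof
    fix x assume "x \<in> G"
    then obtain i where i: "i < n" "x = mvar i ^ lam i" unfolding G_def by blast
    show "x \<in> polyR n" unfolding i(2) mv by (rule polyR_single[OF kmv[OF i(1)]])
  qed
  have Jid: "is_ideal n J" unfolding J_def by (rule gen_ideal[OF Gp])
  have Jp: "J \<subseteq> polyR n" by (rule ideal_sub[OF Jid])
  have Ip: "I \<subseteq> polyR n" unfolding I_def int_closure_def by blast
  have Wup: "\<forall>x\<in>Wset lam n 1. \<forall>y. x + y \<in> Wset lam n 1"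
    unfolding Wset_def using Fw_nonneg by (auto simp: Fw_add add_increasing2)
  have JW: "J \<subseteq> Mon n (Wset lam n 1)" unfolding J_def
  proof (rule gen_least[OF Mon_ideal[OF Wup]], rule subsetI)
    fix x assume "x \<in> G"
    then obtain i where i: "i < n" "x = sg (sg i (lam i)) 1" unfolding G_def using mv by blast
    have "Fw lam n (sg i (lam i)) = 1" using Fw_single[OF i(1)] pos i(1) by simp
    then show "x \<in> Mon n (Wset lam n 1)" unfolding Mon_def Wset_def i(2)
      using polyR_single[OF kmv[OF i(1)]] by simp
  qed
  have IW: "I \<subseteq> Mon n (Wset lam n 1)"
  proof
    fix x assume "x \<in> I"
    then obtain k a where x: "x \<in> polyR n" and k: "k \<ge> 1" and a: "\<forall>i\<in>{1..k}. a i \<in> ideal_pow n J i"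
      and eq: "x ^ k + (\<Sum>i=1..k. a i * x ^ (k - i)) = 0"
      unfolding I_def int_closure_def by blast
    have A: "\<forall>i\<in>{1..k}. GEw (Fw lam n) (a i) (real i * 1)"
    proof
      fix i assume "i \<in> {1..k}"
      then have "a i \<in> ideal_pow n J i" using a by blast
      then have "a i \<in> Mon n (Wset lam n (real i * 1))" using pow_W[OF JW zero_le_one, of i] by blast
      then show "GEw (Fw lam n) (a i) (real i * 1)" by (rule MonW_GE)
    qed
    have "GEw (Fw lam n) x 1" by (rule val[OF Fw_add k A eq])
    then show "x \<in> Mon n (Wset lam n 1)" by (rule GE_MonW[OF x])
  qed
  have JI: "J \<subseteq> I" unfolding I_def by (rule sup_IC[OF Jp])
  have gensJ: "\<forall>i<n. (mvar i :: 'a mpoly) ^ lam i \<in> J"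
  proof (intro allI impI)
    fix i assume "i < n"
    then have "(mvar i :: 'a mpoly) ^ lam i \<in> G" unfolding G_def by blast
    then show "(mvar i :: 'a mpoly) ^ lam i \<in> J" unfolding J_def by (rule gen_in)
  qed
  have gensI: "\<forall>i<n. (mvar i :: 'a mpoly) ^ lam i \<in> I" using gensJ JI by blast
  have MonI: "sg b (1::'a) \<in> I" if kb: "ks b \<subseteq> {..<n}" and Fb: "1 \<le> Fw lam n b" for b
  proof -
    have "(sg b (1::'a)) ^ L \<in> ideal_pow n J (1 * L)"
      using monom_in_pow[OF pos kb Jp gensJ, of 1] Fb unfolding L_def by simp
    then show ?thesis unfolding I_def using IC_of_pow[OF Jp polyR_single[OF kb] L1] by simp
  qed
  show ?thesis
  proof
    assume N: "normal_ideal n (I_ideal n lam :: 'a mpoly set)"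
    show "Comb n lam" unfolding Comb_def
    proof (intro allI impI)
      fix m a assume m1: "1 \<le> m" and ka: "ks a \<subseteq> {..<n}" and Fa: "real m \<le> Fw lam n a"
      have "(sg a (1::'a)) ^ L \<in> ideal_pow n I (m * L)"
        using monom_in_pow[OF pos ka Ip gensI Fa] unfolding L_def .
      then have "(sg a (1::'a)) ^ L \<in> ideal_pow n (ideal_pow n I m) L" using pow_pow[OF Ip] by blast
      then have "sg a (1::'a) \<in> int_closure n (ideal_pow n I m)"
        using IC_of_pow[OF pow_sub[OF Ip] polyR_single[OF ka] L1] by simp
      then have inP: "sg a (1::'a) \<in> ideal_pow n I m"
        using N m1 unfolding normal_ideal_def integrally_closed_def IJ by simp
      have "ideal_pow n I m \<subseteq> Mon n (Mset lam n m)"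
      proof (rule pow_Mon[OF IW])
        show "\<forall>j. \<forall>x\<in>Mset lam n j. \<forall>y. x + y \<in> Mset lam n j"
        proof (intro allI ballI)
          fix j x y assume "x \<in> Mset lam n j"
          then obtain bs where b1: "\<forall>i<j. 1 \<le> Fw lam n (bs i)" and b2: "\<forall>z. (\<Sum>i<j. lk (bs i) z) \<le> lk x z"
            unfolding Mset_def by blast
          have "\<forall>z. (\<Sum>i<j. lk (bs i) z) \<le> lk (x + y) z"
          proof
            fix z show "(\<Sum>i<j. lk (bs i) z) \<le> lk (x + y) z" using b2[rule_format, of z] by (simp add: lookup_add)
          qed
          then show "x + y \<in> Mset lam n j" unfolding Mset_def using b1 by blast
        qed
        show "\<forall>x. x \<in> Mset lam n 0" unfolding Mset_def by simp
        show "\<forall>j. \<forall>x\<in>Mset lam n j. \<forall>y\<in>Wset lam n 1. x + y \<in> Mset lam n (Suc j)"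
        proof (intro allI ballI)
          fix j x y assume "x \<in> Mset lam n j" and y: "y \<in> Wset lam n 1"
          then obtain bs where b1: "\<forall>i<j. 1 \<le> Fw lam n (bs i)" and b2: "\<forall>z. (\<Sum>i<j. lk (bs i) z) \<le> lk x z"
            unfolding Mset_def by blast
          define bs' where "bs' = bs(j := y)"
          have "\<forall>i<Suc j. 1 \<le> Fw lam n (bs' i)" using b1 y unfolding bs'_def Wset_def by (auto simp: less_Suc_eq)
          moreover have "\<forall>z. (\<Sum>i<Suc j. lk (bs' i) z) \<le> lk (x + y) z"
          proof
            fix z
            have "(\<Sum>i<Suc j. lk (bs' i) z) = (\<Sum>i<j. lk (bs i) z) + lk y z"
              unfolding bs'_def by simp
            also have "\<dots> \<le> lk (x + y) z" using b2 by (simp add: lookup_add)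
            finally show "(\<Sum>i<Suc j. lk (bs' i) z) \<le> lk (x + y) z" .
          qed
          ultimately show "x + y \<in> Mset lam n (Suc j)" unfolding Mset_def by blast
        qed
      qed
      then have "a \<in> Mset lam n m" using inP unfolding Mon_def by auto
      then show "\<exists>bs. (\<forall>j<m. 1 \<le> Fw lam n (bs j)) \<and> (\<forall>i. (\<Sum>j<m. lk (bs j) i) \<le> lk a i)"
        unfolding Mset_def by blast
    qed
  next
    assume C: "Comb n lam"
    show "normal_ideal n (I_ideal n lam :: 'a mpoly set)"
      unfolding normal_ideal_def integrally_closed_def IJ
    proof (intro allI impI)
      fix m :: nat assume m1: "1 \<le> m"
      define P where "P = ideal_pow n I m"
      have Pp: "P \<subseteq> polyR n" unfolding P_def by (rule pow_sub[OF Ip])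
      have Pid: "is_ideal n P" unfolding P_def by (rule pow_ideal[OF Ip])
      have PW: "P \<subseteq> Mon n (Wset lam n (real m))" unfolding P_def using pow_W[OF IW, of m] by simp
      have "int_closure n P = P"
      proof
        show "P \<subseteq> int_closure n P" by (rule sup_IC[OF Pp])
        show "int_closure n P \<subseteq> P"
        proof
          fix x assume "x \<in> int_closure n P"
          then obtain k a where x: "x \<in> polyR n" and k: "k \<ge> 1" and a: "\<forall>i\<in>{1..k}. a i \<in> ideal_pow n P i"
            and eq: "x ^ k + (\<Sum>i=1..k. a i * x ^ (k - i)) = 0"
            unfolding int_closure_def by blast
          have A: "\<forall>i\<in>{1..k}. GEw (Fw lam n) (a i) (real i * real m)"
          proof
            fix i assume "i \<in> {1..k}"
            then have "a i \<in> ideal_pow n P i" using a by blast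
            then have "a i \<in> Mon n (Wset lam n (real i * real m))" using pow_W[OF PW of_nat_0_le_iff] by blast
            then show "GEw (Fw lam n) (a i) (real i * real m)" by (rule MonW_GE)
          qed
          have GEx: "GEw (Fw lam n) x (real m)" by (rule val[OF Fw_add k A eq])
          have trm: "sg t (lk x t) \<in> P" if t: "t \<in> ks x" for t
          proof -
            have kt: "ks t \<subseteq> {..<n}" using x t unfolding polyR_def by blast
            have Ft: "real m \<le> Fw lam n t" using GEx t unfolding GEw_def by blast
            obtain bs where B1: "\<forall>j<m. 1 \<le> Fw lam n (bs j)" and B2: "\<forall>i. (\<Sum>j<m. lk (bs j) i) \<le> lk t i"
              using C m1 kt Ft unfolding Comb_def by blast
            define s where "s = (\<Sum>j<m. bs j)"
            define r where "r = t - s"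
            have lks: "lk s z = (\<Sum>j<m. lk (bs j) z)" for z unfolding s_def by (simp add: lookup_sum)
            have tsr: "t = s + r"
              by (rule poly_mapping_eqI) (use B2 lks in \<open>simp add: r_def lookup_add lookup_minus\<close>)
            have kbs: "ks (bs j) \<subseteq> {..<n}" if j: "j < m" for j
            proof
              fix z assume "z \<in> ks (bs j)"
              then have "0 < lk (bs j) z" by (simp add: in_keys_iff)
              also have "lk (bs j) z \<le> (\<Sum>j'<m. lk (bs j') z)" by (rule member_le_sum) (use j in auto)
              also have "\<dots> \<le> lk t z" using B2 by blast
              finally have "lk t z \<noteq> 0" by simp
              then have "z \<in> ks t" by (simp add: in_keys_iff)
              then show "z \<in> {..<n}" using kt by blast
            qed
            have kr: "ks r \<subseteq> {..<n}"
            proof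
              fix z assume "z \<in> ks r"
              then have "lk t z \<noteq> 0" unfolding r_def by (simp add: in_keys_iff lookup_minus)
              then have "z \<in> ks t" by (simp add: in_keys_iff)
              then show "z \<in> {..<n}" using kt by blast
            qed
            have "(\<Prod>j<m. sg (bs j) (1::'a)) \<in> P"
              unfolding P_def by (rule pow_prod) (use MonI kbs B1 in blast)
            moreover have "(\<Prod>j<m. sg (bs j) (1::'a)) = sg s 1" unfolding s_def by (simp add: prod_single)
            ultimately have "sg s (1::'a) * sg r (lk x t) \<in> P"
              using ideal_multR[OF Pid polyR_single[OF kr]] by simp
            moreover have "sg s (1::'a) * sg r (lk x t) = sg t (lk x t)"
              using tsr by (simp add: mult_single)
            ultimately show ?thesis by simp
          qed
          have "x = (\<Sum>t\<in>ks x. sg t (lk x t))"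
          proof (rule poly_mapping_eqI)
            fix z
            have "lk (\<Sum>t\<in>ks x. sg t (lk x t)) z = (\<Sum>t\<in>ks x. if t = z then lk x t else 0)"
              unfolding lookup_sum by (rule sum.cong) (auto simp: lookup_single when_def)
            also have "\<dots> = lk x z" by (simp add: in_keys_iff)
            finally show "lk x z = lk (\<Sum>t\<in>ks x. sg t (lk x t)) z" by simp
          qed
          moreover have "(\<Sum>t\<in>ks x. sg t (lk x t)) \<in> P" using trm by (intro ideal_sum[OF Pid]) blast
          ultimately show "x \<in> P" by simp
        qed
      qed
      then show "int_closure n (ideal_pow n I m) = ideal_pow n I m" unfolding P_def .
    qed
  qed
qed



theorem theorem5p1:
  fixes lam :: "nat \<Rightarrow> nat" and n :: nat
  assumes "n \<ge> 2"
    and "\<forall>i<n. lam i > 0"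
  defines "l \<equiv> Lcm (lam ` {..<n - 1})"
  defines "lam' \<equiv> lam(n - 1 := lam (n - 1) + l)"
  shows "(normal_ideal n (I_ideal n lam' :: 'a::field mpoly set) \<longrightarrow> normal_ideal n (I_ideal n lam :: 'a mpoly set))
       \<and> (lam (n - 1) \<ge> l \<and> normal_ideal n (I_ideal n lam :: 'a mpoly set) \<longrightarrow> normal_ideal n (I_ideal n lam' :: 'a mpoly set))"
proof -
  obtain k where n: "n = Suc k" using assms(1) by (cases n) auto
  have nk: "n - 1 = k" using n by simp
  have pos: "\<forall>i<n. lam i > 0" using assms(2) .
  have fin: "finite (lam ` {..<k})" by simp
  have "0 \<notin> lam ` {..<k}"
  proof
    assume "0 \<in> lam ` {..<k}"
    then obtain i where "i < k" "lam i = 0" by auto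
    then show False using pos n by (metis less_Suc_eq less_not_refl)
  qed
  then have L0: "Lcm (lam ` {..<k}) \<noteq> 0" using Lcm_0_iff[OF fin] by blast
  have l0: "l > 0" unfolding l_def nk using L0 by (intro gr0I) simp
  have dv: "\<forall>i<k. lam i dvd l" unfolding l_def nk by (auto intro: dvd_Lcm)
  have lam'e: "lam' = lam(k := lam k + l)" unfolding lam'_def nk ..
  have pos': "\<forall>i<n. lam' i > 0" using pos unfolding lam'e by auto
  have E1: "normal_ideal n (I_ideal n lam :: 'a mpoly set) \<longleftrightarrow> Comb n lam" by (rule normal_iff[OF pos])
  have E2: "normal_ideal n (I_ideal n lam' :: 'a mpoly set) \<longleftrightarrow> Comb n lam'" by (rule normal_iff[OF pos'])
  show ?thesis
    using comb1[OF n pos dv l0 lam'e] comb2[OF n pos dv l0 lam'e] E1 E2 nk by auto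
qed

end
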